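(* Let $D\le F\le G$ be locally finite graphs ($D$ a subgraph of $F$, $F$ a subgraph of $G$). Then any two of the following statements imply the third: (1) $D$ is faithful to $F$; (2) $F$ is faithful to $G$; (3) $D$ is faithful to $G$.
   Context: A ray is a one-way infinite path; two rays of a graph $H$ are equivalent in $H$ if for every finite $S\subseteq V(H)$ some component of $H-S$ contains tails of both; the classes are the ends of $H$. A subgraph $A$ of $B$ is faithful to $B$ if (i) every end of $B$ contains a ray of $A$, and (ii) any two rays of $A$ are equivalent in $A$ if and only if they are equivalent in $B$. *)

theory Defs
  imports Main
begin

text \<open>Simple undirected graphs: a vertex set and a set of 2-element edges.\<close>

type_synonym 'a graph = "'a set \<times> 'a set set"

definition verts :: "'a graph \<Rightarrow> 'a set" where "verts H = fst H"
definition edges :: "'a graph \<Rightarrow> 'a set set" where "edges H = snd H"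

definition graph :: "'a graph \<Rightarrow> bool" where
  "graph H \<longleftrightarrow> (\<forall>e\<in>edges H. \<exists>u v. e = {u, v} \<and> u \<noteq> v \<and> u \<in> verts H \<and> v \<in> verts H)"

definition locally_finite :: "'a graph \<Rightarrow> bool" where
  "locally_finite H \<longleftrightarrow> (\<forall>v\<in>verts H. finite {u. {u, v} \<in> edges H})"

definition subgraph :: "'a graph \<Rightarrow> 'a graph \<Rightarrow> bool" where
  "subgraph A B \<longleftrightarrow> graph A \<and> graph B \<and> verts A \<subseteq> verts B \<and> edges A \<subseteq> edges B"

text \<open>A ray of H: a one-way infinite path, given by its injective vertex sequence.\<close>
definition is_ray :: "'a graph \<Rightarrow> (nat \<Rightarrow> 'a) \<Rightarrow> bool" where
  "is_ray H r \<longleftrightarrow> inj r \<and> (\<forall>i. r i \<in> verts H) \<and> (\<forall>i. {r i, r (Suc i)} \<in> edges H)"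

definition adj_avoid :: "'a graph \<Rightarrow> 'a set \<Rightarrow> 'a \<Rightarrow> 'a \<Rightarrow> bool" where
  "adj_avoid H S x y \<longleftrightarrow> x \<in> verts H - S \<and> y \<in> verts H - S \<and> {x, y} \<in> edges H"

definition same_comp :: "'a graph \<Rightarrow> 'a set \<Rightarrow> 'a \<Rightarrow> 'a \<Rightarrow> bool" where
  "same_comp H S x y \<longleftrightarrow> x \<in> verts H - S \<and> y \<in> verts H - S \<and> (adj_avoid H S)\<^sup>*\<^sup>* x y"

definition ray_equiv :: "'a graph \<Rightarrow> (nat \<Rightarrow> 'a) \<Rightarrow> (nat \<Rightarrow> 'a) \<Rightarrow> bool" where
  "ray_equiv H r s \<longleftrightarrow>
     (\<forall>S. finite S \<and> S \<subseteq> verts H \<longrightarrow>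
        (\<exists>n. \<forall>i\<ge>n. \<forall>j\<ge>n. same_comp H S (r i) (s j)))"

definition faithful :: "'a graph \<Rightarrow> 'a graph \<Rightarrow> bool" where
  "faithful A B \<longleftrightarrow>
     (\<forall>r. is_ray B r \<longrightarrow> (\<exists>s. is_ray A s \<and> ray_equiv B r s)) \<and>
     (\<forall>r s. is_ray A r \<and> is_ray A s \<longrightarrow> (ray_equiv A r s \<longleftrightarrow> ray_equiv B r s))"

end

theory Submission
  imports Defs
begin

lemma ray_mono: "is_ray A r \<Longrightarrow> subgraph A B \<Longrightarrow> is_ray B r"
  unfolding is_ray_def subgraph_def by auto

lemma adj_sym: "adj_avoid H S x y \<Longrightarrow> adj_avoid H S y x"
  unfolding adj_avoid_def by (simp add: insert_commute)

lemma rt_sym: "(adj_avoid H S)\<^sup>*\<^sup>* x y \<Longrightarrow> (adj_avoid H S)\<^sup>*\<^sup>* y x"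
proof (induction rule: rtranclp_induct)
  case base then show ?case by simp
next
  case (step y z)
  then show ?case using adj_sym[of H S y z]
    by (simp add: converse_rtranclp_into_rtranclp)
qed

lemma sc_sym: "same_comp H S x y \<Longrightarrow> same_comp H S y x"
  unfolding same_comp_def using rt_sym[of H S x y] by simp

lemma sc_trans: "same_comp H S x y \<Longrightarrow> same_comp H S y z \<Longrightarrow> same_comp H S x z"
  unfolding same_comp_def using rtranclp_trans[of "adj_avoid H S" x y z] by simp
lemma eq_sym: "ray_equiv H r s \<Longrightarrow> ray_equiv H s r"
  unfolding ray_equiv_def
proof (intro allI impI)
  fix S assume a: "\<forall>S. finite S \<and> S \<subseteq> verts H \<longrightarrow> (\<exists>n. \<forall>i\<ge>n. \<forall>j\<ge>n. same_comp H S (r i) (s j))"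
    and S: "finite S \<and> S \<subseteq> verts H"
  then obtain n where n: "\<forall>i\<ge>n. \<forall>j\<ge>n. same_comp H S (r i) (s j)" by blast
  show "\<exists>n. \<forall>i\<ge>n. \<forall>j\<ge>n. same_comp H S (s i) (r j)"
    by (rule exI[of _ n]) (simp add: n sc_sym)
qed

lemma eq_trans: assumes "ray_equiv H r s" "ray_equiv H s t" shows "ray_equiv H r t"
  unfolding ray_equiv_def
proof (intro allI impI)
  fix S assume S: "finite S \<and> S \<subseteq> verts H"
  obtain n1 where n1: "\<forall>i\<ge>n1. \<forall>j\<ge>n1. same_comp H S (r i) (s j)"
    using assms(1) S unfolding ray_equiv_def by blast
  obtain n2 where n2: "\<forall>i\<ge>n2. \<forall>j\<ge>n2. same_comp H S (s i) (t j)"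
    using assms(2) S unfolding ray_equiv_def by blast
  show "\<exists>n. \<forall>i\<ge>n. \<forall>j\<ge>n. same_comp H S (r i) (t j)"
  proof (intro exI allI impI)
    fix i j assume "max n1 n2 \<le> i" "max n1 n2 \<le> j"
    then show "same_comp H S (r i) (t j)"
      using n1 n2 sc_trans[of H S "r i" "s (max n1 n2)" "t j"] by simp
  qed
qed

lemma sc_mono: assumes "subgraph A B" "same_comp A (S \<inter> verts A) x y"
  shows "same_comp B S x y"
proof -
  have le: "adj_avoid A (S \<inter> verts A) \<le> adj_avoid B S"
    using assms(1) unfolding subgraph_def adj_avoid_def by auto
  have "(adj_avoid B S)\<^sup>*\<^sup>* x y" using assms(2) rtranclp_mono[OF le] unfolding same_comp_def by auto
  moreover have "x \<in> verts B - S" "y \<in> verts B - S" using assms unfolding same_comp_def subgraph_def by auto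
  ultimately show ?thesis unfolding same_comp_def by simp
qed

lemma eq_mono: assumes "subgraph A B" "ray_equiv A r s" shows "ray_equiv B r s"
  unfolding ray_equiv_def
proof (intro allI impI)
  fix S assume S: "finite S \<and> S \<subseteq> verts B"
  then have "finite (S \<inter> verts A) \<and> S \<inter> verts A \<subseteq> verts A" by simp
  then obtain n where "\<forall>i\<ge>n. \<forall>j\<ge>n. same_comp A (S \<inter> verts A) (r i) (s j)"
    using assms(2) unfolding ray_equiv_def by blast
  then show "\<exists>n. \<forall>i\<ge>n. \<forall>j\<ge>n. same_comp B S (r i) (s j)"
    using sc_mono[OF assms(1)] by blast
qed
lemma f1: "faithful A B \<Longrightarrow> is_ray B r \<Longrightarrow> \<exists>s. is_ray A s \<and> ray_equiv B r s"
  unfolding faithful_def by blast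
lemma f2: "faithful A B \<Longrightarrow> is_ray A r \<Longrightarrow> is_ray A s \<Longrightarrow> ray_equiv A r s = ray_equiv B r s"
  unfolding faithful_def by blast
lemma fI: "(\<And>r. is_ray B r \<Longrightarrow> \<exists>s. is_ray A s \<and> ray_equiv B r s) \<Longrightarrow>
  (\<And>r s. is_ray A r \<Longrightarrow> is_ray A s \<Longrightarrow> ray_equiv A r s = ray_equiv B r s) \<Longrightarrow> faithful A B"
  unfolding faithful_def by blast

theorem lemma5:
  fixes D F G :: "'a graph"
  assumes "locally_finite D" and "locally_finite F" and "locally_finite G"
    and "subgraph D F" and "subgraph F G"
  shows "(faithful D F \<and> faithful F G \<longrightarrow> faithful D G)
       \<and> (faithful D F \<and> faithful D G \<longrightarrow> faithful F G)
       \<and> (faithful F G \<and> faithful D G \<longrightarrow> faithful D F)"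
proof (intro conjI impI)
  note DF = assms(4) and FG = assms(5)
  assume h: "faithful D F \<and> faithful F G"
  show "faithful D G"
  proof (rule fI)
    fix r assume r: "is_ray G r"
    then obtain s where s: "is_ray F s" "ray_equiv G r s" using h f1 by blast
    then obtain t where t: "is_ray D t" "ray_equiv F s t" using h f1 by blast
    have "ray_equiv G r t" using eq_trans[OF s(2) eq_mono[OF FG t(2)]] .
    then show "\<exists>s. is_ray D s \<and> ray_equiv G r s" using t by blast
  next
    fix r s assume "is_ray D r" "is_ray D s"
    then show "ray_equiv D r s = ray_equiv G r s"
      using h f2[of D F r s] f2[of F G r s] ray_mono[OF _ DF] by simp
  qed
next
  note DF = assms(4) and FG = assms(5)
  assume h: "faithful D F \<and> faithful D G"
  show "faithful F G"
  proof (rule fI)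
    fix r assume r: "is_ray G r"
    then obtain s where "is_ray D s" "ray_equiv G r s" using h f1 by blast
    then show "\<exists>s. is_ray F s \<and> ray_equiv G r s" using ray_mono[OF _ DF] by blast
  next
    fix r s assume rs: "is_ray F r" "is_ray F s"
    show "ray_equiv F r s = ray_equiv G r s"
    proof
      assume "ray_equiv F r s" then show "ray_equiv G r s" using eq_mono[OF FG] by blast
    next
      assume e: "ray_equiv G r s"
      obtain r' where r': "is_ray D r'" "ray_equiv F r r'" using h rs f1 by blast
      obtain s' where s': "is_ray D s'" "ray_equiv F s s'" using h rs f1 by blast
      have "ray_equiv G r' s'"
        using eq_trans[OF eq_trans[OF eq_sym[OF eq_mono[OF FG r'(2)]] e] eq_mono[OF FG s'(2)]] .
      then have "ray_equiv D r' s'" using h r' s' f2 by blast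
      then have "ray_equiv F r' s'" using eq_mono[OF DF] by blast
      then show "ray_equiv F r s" using eq_trans[OF eq_trans[OF r'(2)] eq_sym[OF s'(2)]] by blast
    qed
  qed
next
  note DF = assms(4) and FG = assms(5)
  assume h: "faithful F G \<and> faithful D G"
  show "faithful D F"
  proof (rule fI)
    fix r assume r: "is_ray F r"
    then obtain s where s: "is_ray D s" "ray_equiv G r s"
      using h ray_mono[OF _ FG] f1 by blast
    have "ray_equiv F r s" using h r s ray_mono[OF s(1) DF] f2[of F G r s] by simp
    then show "\<exists>s. is_ray D s \<and> ray_equiv F r s" using s by blast
  next
    fix r s assume "is_ray D r" "is_ray D s"
    then show "ray_equiv D r s = ray_equiv F r s"
      using h f2[of D G r s] f2[of F G r s] ray_mono[OF _ DF] by simp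
  qed
qed

end
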